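(* Let $\tau$ be a non-scalar tame inertial type, $(J,r)$ a maximal refined shape for $\tau$, and $\mathfrak{P}\in\mathrm{Ext}^1_{\mathbb F}(\mathfrak{M},\mathfrak{N})$ an extension of type $\tau$ and refined shape $(J,r)$ (where $(\mathfrak M,\mathfrak N)$ is a pair of rank one modules of refined shape $(J,r)$). Let $D=D(\mathfrak{P})$ be its Dieudonné module. Then for each $i\in\mathbb{Z}/f'\mathbb{Z}$: if $i\in J$ then $F=0$ on $D_{\eta,i-1}$, and if $i\notin J$ then $V=0$ on $D_{\eta,i}$.
   Context: Setup. $p$ odd prime, $K/\mathbb Q_p$ finite with residue field of size $p^f$, ramification index $e$; $L/K$ unramified quadratic; $\pi$ uniformiser of $K$. $\tau=\eta\oplus\eta'$ non-scalar tame inertial type (ordering fixed): principal series ($\eta\ne\eta'$ both extend to $G_K$) or cuspidal ($\eta'=\eta^{p^f}\ne\eta$, $\eta$ extends to $G_L$). $K'=K(\pi^{1/(p^f-1)})$, $f'=f$, or $K'=L(\pi^{1/(p^{2f}-1)})$, $f'=2f$; $k'$ residue field of $K'$; $e'=e(p^{f'}-1)$; $\pi'=\pi^{1/(p^{f'}-1)}$; $E(u)$ its minimal polynomial over $W(k')[1/p]$; $h(g)\in k'$ reduction of $g(\pi')/\pi'$. $\mathbb F$ finite field containing images of $k'$ and of $\bar\eta,\bar\eta'$; $\sigma_i:k'\hookrightarrow\mathbb F$, $\sigma_{i+1}^p=\sigma_i$; $e_i\in k'\otimes\mathbb F$ the idempotents with $(x\otimes1)e_i=(1\otimes\sigma_i(x))e_i$.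 $k_i,k'_i\in\mathbb Z/(p^{f'}-1)$ with $\bar\eta=\sigma_i\circ h^{k_i}$, $\bar\eta'=\sigma_i\circ h^{k'_i}$ on $I(K'/K)$; $[n]$ least non-negative residue mod $p^{f'}-1$. Rank one modules $\mathfrak M(r,a,c)$ over $\mathfrak S_\mathbb F=(k'\otimes\mathbb F)[[u]]$: $e_i\mathfrak M=\mathbb F[[u]]m_i$, $\Phi(1\otimes m_{i-1})=a_iu^{r_i}m_i$, $\hat g(\sum m_i)=\sum h(g)^{c_i}m_i$. A pair $(\mathfrak M(r,a,c),\mathfrak M(s,b,d))$ has type $\tau$ if $\{c_i,d_i\}=\{k_i,k'_i\}$ and $r_i+s_i=e'$; its shape is $J=\{i:c_i=k_i\}$ and refined shape $(J,r)$; $(i-1,i)$ is a transition if exactly one of $i-1,i$ lies in $J$; $(J,r)$ is maximal if $r_i=e'$ at non-transitions and $r_i=e'-[c_i-d_i]$ at transitions. $\mathrm{Ext}^1_{\mathbb F}$ is taken in the category of $\mathfrak S_\mathbb F$-modules with $\varphi$-semilinear endomorphism and commuting semilinear descent data; every such extension $\mathfrak P$ of this pair is a rank two Breuil–Kisin module of height $\le1$ and type $\tau$. Dieudonné module: $D(\mathfrak P)=\mathfrak P/u\mathfrak P$ with the induced $\mathrm{Gal}(K'/K)$-action, $F$ induced by $\varphi_\mathfrak P$, and $V=c^{-1}\mathfrak V \bmod u$, where $E(0)=cp$ and $\mathfrak V$ is the unique map with $\mathfrak V\circ\varphi_{\mathfrak P}=E(u)$. $D_\eta$ is the submodule on which $I(K'/K)$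 acts via $\bar\eta$, and $D_{\eta,i}=e_iD_\eta$; $F$ maps $D_{\eta,i}\to D_{\eta,i+1}$ and $V$ maps $D_{\eta,i+1}\to D_{\eta,i}$. *)

theory Defs
  imports "HOL-Computational_Algebra.Formal_Power_Series" "HOL-Computational_Algebra.Primes"
begin

(* The coefficient field F is a type 'a.  The index set
   Z/f'Z is represented by {0..<f'}; predecessor i-1 is prev f' i.
   An element g of I(K'/K) is represented by zeta = sigma_0(h(g)) in F,
   which ranges over the (p^f'-1)-th roots of unity of F; then
   sigma_i(h(g)) = zeta^(p^(f'-i)) since sigma_(i+1)^p = sigma_i.
   On e_i(k' tensor F)[[u]] = F[[u]] the variable u is fps_X.            *)

definition prev :: "nat \<Rightarrow> nat \<Rightarrow> nat" where
  "prev f' i = (i + f' - 1) mod f'"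

definition roots_q :: "nat \<Rightarrow> nat \<Rightarrow> ('a::field) set" where
  "roots_q p f' = {z. z ^ (p ^ f' - 1) = 1}"

(* sigma_i(h(g)) for the inertia element g with sigma_0(h(g)) = zeta *)
definition omega :: "nat \<Rightarrow> nat \<Rightarrow> nat \<Rightarrow> 'a::field \<Rightarrow> 'a" where
  "omega p f' i z = z ^ (p ^ (f' - i))"

definition resid :: "nat \<Rightarrow> nat \<Rightarrow> int \<Rightarrow> nat" where
  "resid p f' n = nat (n mod int (p ^ f' - 1))"

definition fps_scale :: "'a::comm_ring_1 \<Rightarrow> 'a fps \<Rightarrow> 'a fps" where
  "fps_scale w g = Abs_fps (\<lambda>n. w ^ n * fps_nth g n)"

definition fps_frob :: "nat \<Rightarrow> 'a::comm_ring_1 fps \<Rightarrow> 'a fps" where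
  "fps_frob p g = Abs_fps (\<lambda>n. if p dvd n then fps_nth g (n div p) else 0)"

(* 2x2 matrices (A11, A12, A21, A22) w.r.t. an ordered basis (m, n):
   column 1 = coordinates of the image of m, column 2 = image of n.   *)
type_synonym 'b mat2 = "'b \<times> 'b \<times> 'b \<times> 'b"

fun mat_app :: "'b::comm_ring_1 mat2 \<Rightarrow> 'b \<times> 'b \<Rightarrow> 'b \<times> 'b" where
  "mat_app (a11, a12, a21, a22) (v1, v2) = (a11 * v1 + a12 * v2, a21 * v1 + a22 * v2)"

fun mat_mult :: "'b::comm_ring_1 mat2 \<Rightarrow> 'b mat2 \<Rightarrow> 'b mat2" where
  "mat_mult (a11, a12, a21, a22) (b11, b12, b21, b22) =
     (a11 * b11 + a12 * b21, a11 * b12 + a12 * b22,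
      a21 * b11 + a22 * b21, a21 * b12 + a22 * b22)"

fun mat_mod_u :: "'a::comm_ring_1 fps mat2 \<Rightarrow> 'a mat2" where
  "mat_mod_u (a11, a12, a21, a22) = (fps_nth a11 0, fps_nth a12 0, fps_nth a21 0, fps_nth a22 0)"

(* Extensions P of M(r,a,c) by N(s,b,d) (0 -> N -> P -> M -> 0).
   e_i P = F[[u]] m_i + F[[u]] n_i with n_i the basis of N and m_i a lift
   of the basis of M.  Then
     phi(1 (x) m_(i-1)) = a_i u^(r_i) m_i + x_i n_i,
     phi(1 (x) n_(i-1)) = b_i u^(s_i) n_i,
     g^(m_i) = sigma_i(h g)^(c_i) m_i + z_i(g) n_i,
     g^(n_i) = sigma_i(h g)^(d_i) n_i.                                  *)

(* matrix of the linearised Frobenius  e_(i-1) phi^*P -> e_i P *)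
definition Phi ::
  "(nat \<Rightarrow> nat) \<Rightarrow> (nat \<Rightarrow> 'a::field) \<Rightarrow> (nat \<Rightarrow> nat) \<Rightarrow> (nat \<Rightarrow> 'a) \<Rightarrow> (nat \<Rightarrow> 'a fps)
   \<Rightarrow> nat \<Rightarrow> 'a fps mat2" where
  "Phi r a s b x i =
     (fps_const (a i) * fps_X ^ r i, 0, x i, fps_const (b i) * fps_X ^ s i)"

definition phi_P where
  "phi_P p r a s b x i v =
     mat_app (Phi r a s b x i) (fps_frob p (fst v), fps_frob p (snd v))"

(* matrix of the descent datum g^ on e_i P, g given by zeta *)
definition Gmat ::
  "nat \<Rightarrow> nat \<Rightarrow> (nat \<Rightarrow> nat) \<Rightarrow> (nat \<Rightarrow> nat) \<Rightarrow> (nat \<Rightarrow> 'a::field \<Rightarrow> 'a fps)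
   \<Rightarrow> nat \<Rightarrow> 'a \<Rightarrow> 'a fps mat2" where
  "Gmat p f' c d z i zeta =
     (fps_const (omega p f' i zeta ^ c i), 0, z i zeta, fps_const (omega p f' i zeta ^ d i))"

definition g_P where
  "g_P p f' c d z i zeta v =
     mat_app (Gmat p f' c d z i zeta)
       (fps_scale (omega p f' i zeta) (fst v), fps_scale (omega p f' i zeta) (snd v))"

definition is_extension where
  "is_extension p f' r a c s b d x z \<longleftrightarrow>
     (\<forall>i<f'. a i \<noteq> 0 \<and> b i \<noteq> 0) \<and>
     (\<forall>i<f'. \<forall>zeta\<in>roots_q p f'. \<forall>v.
        g_P p f' c d z i zeta (phi_P p r a s b x i v)
          = phi_P p r a s b x i (g_P p f' c d z (prev f' i) zeta v)) \<and>
     (\<forall>i<f'. \<forall>zeta\<in>roots_q p f'. \<forall>xi\<in>roots_q p f'. \<forall>v.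
        g_P p f' c d z i zeta (g_P p f' c d z i xi v) = g_P p f' c d z i (zeta * xi) v) \<and>
     (\<forall>i<f'. \<forall>v. g_P p f' c d z i 1 v = v)"

(* tame non-scalar inertial type: k_i, k'_i defined by
   eta = sigma_i o h^(k_i), eta' = sigma_i o h^(k'_i) on I(K'/K)            *)
definition tame_type :: "'a::field itself \<Rightarrow> nat \<Rightarrow> nat \<Rightarrow> nat \<Rightarrow> (nat \<Rightarrow> nat) \<Rightarrow> (nat \<Rightarrow> nat) \<Rightarrow> bool" where
  "tame_type T p f f' k k' \<longleftrightarrow>
     (\<forall>i<f'. k i < p ^ f' - 1 \<and> k' i < p ^ f' - 1) \<and>
     (\<forall>i<f'. \<forall>zeta\<in>(roots_q p f' :: 'a set).
        omega p f' i zeta ^ k i = zeta ^ k 0 \<and> omega p f' i zeta ^ k' i = zeta ^ k' 0) \<and>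
     ((f' = f \<and> k 0 \<noteq> k' 0)
      \<or> (f' = 2 * f \<and> k 0 \<noteq> k' 0 \<and> k' 0 = (p ^ f * k 0) mod (p ^ f' - 1)))"

definition pair_has_type where
  "pair_has_type f' e' k k' r c s d \<longleftrightarrow>
     (\<forall>i<f'. {c i, d i} = {k i, k' i} \<and> r i + s i = e')"

definition shape :: "nat \<Rightarrow> (nat \<Rightarrow> nat) \<Rightarrow> (nat \<Rightarrow> nat) \<Rightarrow> nat set" where
  "shape f' k c = {i. i < f' \<and> c i = k i}"

definition transition :: "nat \<Rightarrow> nat set \<Rightarrow> nat \<Rightarrow> bool" where
  "transition f' J i \<longleftrightarrow> (prev f' i \<in> J) \<noteq> (i \<in> J)"

definition maximal_shape where
  "maximal_shape p f' e' J r c d \<longleftrightarrow>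
     (\<forall>i<f'. (\<not> transition f' J i \<longrightarrow> r i = e') \<and>
             (transition f' J i \<longrightarrow> r i = e' - resid p f' (int (c i) - int (d i))))"

(* e_i D = F m_i-bar + F n_i-bar *)

definition F_D where
  "F_D r a s b x i v = mat_app (mat_mod_u (Phi r a s b x i)) v"

(* the matrix of frak V : e_i P -> e_(i-1) phi^*P, unique with V o phi = E(u);
   E(u) = u^e' modulo p *)
definition Vfrak where
  "Vfrak e' r a s b x i =
     (THE W. mat_mult W (Phi r a s b x i) = (fps_X ^ e', 0, 0, fps_X ^ e'))"

definition V_D where   (* V = c^-1 frak V mod u : D_i -> D_(i-1) *)
  "V_D e' cbar r a s b x i v =
     (let w = mat_app (mat_mod_u (Vfrak e' r a s b x i)) v
      in (inverse (cbar i) * fst w, inverse (cbar i) * snd w))"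

(* D_(eta,i): the part of e_i D on which I(K'/K) acts through eta-bar *)
definition D_eta where
  "D_eta p f' k c d z i =
     {v. \<forall>zeta\<in>roots_q p f'.
        mat_app (mat_mod_u (Gmat p f' c d z i zeta)) v = (zeta ^ k 0 * fst v, zeta ^ k 0 * snd v)}"

end

theory Submission
  imports Defs
begin

lemma frob0[simp]: "fps_nth (fps_frob p g) 0 = fps_nth g 0" by (simp add: fps_frob_def)
lemma scale0[simp]: "fps_nth (fps_scale w g) 0 = fps_nth g 0" by (simp add: fps_scale_def)

lemma mat_app0: "(fps_nth (fst (mat_app M w)) 0, fps_nth (snd (mat_app M w)) 0) = mat_app (mat_mod_u M) (fps_nth (fst w) 0, fps_nth (snd w) 0)"
  by (cases M; cases w) (auto simp: fps_mult_nth_0)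

lemma Vfrak_eq:
  fixes a b :: "nat \<Rightarrow> 'a::field"
  assumes "a i \<noteq> 0" "b i \<noteq> 0" "r i + s i = e'"
  shows "Vfrak e' r a s b x i = (fps_const (inverse (a i)) * fps_X ^ s i, 0,
      - x i * fps_const (inverse (a i * b i)), fps_const (inverse (b i)) * fps_X ^ r i)"
proof -
  have e: "fps_X ^ e' = (fps_X ^ s i * fps_X ^ r i :: 'a fps)" using assms(3) by (simp add: power_add[symmetric] add.commute)
  have c1: "fps_const (inverse (a i)) * fps_const (a i) = 1" unfolding fps_const_mult[symmetric] using assms by simp
  have c2: "fps_const (inverse (b i)) * fps_const (b i) = 1" unfolding fps_const_mult[symmetric] using assms by simp
  have c3: "fps_const (inverse (a i * b i)) * fps_const (a i) = fps_const (inverse (b i))" unfolding fps_const_mult[symmetric] using assms by (simp add: field_simps)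
  have e1: "fps_const (inverse (a i)) * fps_X ^ s i * (fps_const (a i) * fps_X ^ r i) = fps_X ^ e'"
      by (metis (no_types, lifting) c1 e mult.assoc mult.left_commute mult_1)
  have e2: "- x i * fps_const (inverse (a i * b i)) * (fps_const (a i) * fps_X ^ r i) + fps_const (inverse (b i)) * fps_X ^ r i * x i = 0"
      by (metis (no_types, lifting) c3 add.left_inverse minus_mult_left mult.assoc mult.commute)
  have e3: "fps_const (inverse (b i)) * fps_X ^ r i * (fps_const (b i) * fps_X ^ s i) = fps_X ^ e'"
      by (metis (no_types, lifting) c2 e mult.assoc mult.left_commute mult_1 mult.commute)
  show ?thesis unfolding Vfrak_def
  proof (rule the_equality)
    show "mat_mult (fps_const (inverse (a i)) * fps_X ^ s i, 0,
      - x i * fps_const (inverse (a i * b i)), fps_const (inverse (b i)) * fps_X ^ r i) (Phi r a s b x i) =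
      (fps_X ^ e', 0, 0, fps_X ^ e')"
      using e1 e2 e3 by (simp add: Phi_def)
  next
    fix W assume h: "mat_mult W (Phi r a s b x i) = (fps_X ^ e', 0, 0, fps_X ^ e')"
    obtain w1 w2 w3 w4 where W: "W = (w1,w2,w3,w4)" by (cases W) auto
    have nz1: "fps_const (a i) * fps_X ^ r i \<noteq> (0::'a fps)" using assms by simp
    have nz2: "fps_const (b i) * fps_X ^ s i \<noteq> (0::'a fps)" using assms by simp
    from h have h1: "w1 * (fps_const (a i) * fps_X ^ r i) + w2 * x i = fps_X ^ e'"
      and h2: "w2 * (fps_const (b i) * fps_X ^ s i) = 0"
      and h3: "w3 * (fps_const (a i) * fps_X ^ r i) + w4 * x i = 0"
      and h4: "w4 * (fps_const (b i) * fps_X ^ s i) = fps_X ^ e'"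
      by (auto simp: W Phi_def)
    have w2: "w2 = 0" using h2 nz2 by simp
    have w1: "w1 = fps_const (inverse (a i)) * fps_X ^ s i"
      using h1 e1 nz1 w2 by (metis add.right_neutral mult_cancel_right mult_zero_left)
    have w4: "w4 = fps_const (inverse (b i)) * fps_X ^ r i"
      using h4 e3 nz2 by (metis mult_cancel_right)
    have "w3 * (fps_const (a i) * fps_X ^ r i) = (- x i * fps_const (inverse (a i * b i))) * (fps_const (a i) * fps_X ^ r i)"
      using h3 e2 w4 by (metis add.commute add_right_cancel mult.commute)
    hence w3: "w3 = - x i * fps_const (inverse (a i * b i))" using nz1 mult_cancel_right by blast
    show "W = (fps_const (inverse (a i)) * fps_X ^ s i, 0,
      - x i * fps_const (inverse (a i * b i)), fps_const (inverse (b i)) * fps_X ^ r i)"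
      using W w1 w2 w3 w4 by simp
  qed
qed

theorem lemma5p4p1:
  fixes p f f' e e' :: nat
    and k k' :: "nat \<Rightarrow> nat"
    and r s c d :: "nat \<Rightarrow> nat"
    and a b cbar :: "nat \<Rightarrow> 'a::field"
    and x :: "nat \<Rightarrow> 'a fps"
    and z :: "nat \<Rightarrow> 'a \<Rightarrow> 'a fps"
  assumes "prime p" and "odd p" and "f \<ge> 1" and "e \<ge> 1"
    and "e' = e * (p ^ f' - 1)"
    and "finite (UNIV :: 'a set)" and "CHAR('a) = p"
    and "\<exists>w::'a. w ^ (p ^ f' - 1) = 1 \<and> (\<forall>j. 0 < j \<and> j < p ^ f' - 1 \<longrightarrow> w ^ j \<noteq> 1)"
    and "tame_type TYPE('a) p f f' k k'"
    and "pair_has_type f' e' k k' r c s d"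
    and "maximal_shape p f' e' (shape f' k c) r c d"
    and "is_extension p f' r a c s b d x z"
    and "\<forall>i<f'. cbar i \<noteq> 0"
  shows "\<forall>i<f'.
           (i \<in> shape f' k c \<longrightarrow>
              (\<forall>v\<in>D_eta p f' k c d z (prev f' i). F_D r a s b x i v = (0, 0)))
         \<and> (i \<notin> shape f' k c \<longrightarrow>
              (\<forall>v\<in>D_eta p f' k c d z i. V_D e' cbar r a s b x i v = (0, 0)))"
proof -
  note A = assms
  define N where "N = p ^ f' - 1"
  have tt: "tame_type TYPE('a) p f f' k k'" by fact
  have fpos: "f' > 0" using tt A(3) unfolding tame_type_def by auto
  have p3: "p \<ge> 3" using A(1,2) prime_ge_2_nat[of p] proof -
    have "p \<ge> 2" using A(1) prime_ge_2_nat by blast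
    moreover have "p \<noteq> 2" using A(2) by auto
    ultimately show ?thesis by linarith
  qed
  have "p ^ f' \<ge> p" using fpos p3 by (simp add: self_le_power)
  hence N2: "N \<ge> 2" using p3 unfolding N_def by linarith
  have eN: "e' \<ge> N" using A(4,5) unfolding N_def by simp
  obtain w :: 'a where w1: "w ^ N = 1" and wprim: "\<forall>j. 0 < j \<and> j < N \<longrightarrow> w ^ j \<noteq> 1"
    using A(8) unfolding N_def by blast
  have wroot: "w \<in> roots_q p f'" using w1 unfolding roots_q_def N_def by simp
  have wnz: "w \<noteq> 0" proof
    assume "w = 0" with w1 N2 show False by (simp add: power_0_left)
  qed
  have k0: "k 0 < N" "k' 0 < N" "k 0 \<noteq> k' 0" using tt fpos unfolding tame_type_def N_def by auto
  have wne: "w ^ k 0 \<noteq> w ^ k' 0"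
  proof
    assume h: "w ^ k 0 = w ^ k' 0"
    show False
    proof (cases "k 0 < k' 0")
      case True
      have "w ^ k' 0 = w ^ k 0 * w ^ (k' 0 - k 0)" using True by (simp flip: power_add)
      hence "w ^ (k' 0 - k 0) = 1" using h wnz by simp
      thus False using wprim True k0 by auto
    next
      case False
      hence F: "k' 0 < k 0" using k0 by simp
      have "w ^ k 0 = w ^ k' 0 * w ^ (k 0 - k' 0)" using F by (simp flip: power_add)
      hence "w ^ (k 0 - k' 0) = 1" using h wnz by simp
      thus False using wprim F k0 by auto
    qed
  qed
  have om: "\<And>i. i < f' \<Longrightarrow> omega p f' i w ^ k i = w ^ k 0 \<and> omega p f' i w ^ k' i = w ^ k' 0"
    using tt wroot unfolding tame_type_def by blast
  have kb: "\<And>i. i < f' \<Longrightarrow> k i < N \<and> k' i < N" using tt unfolding tame_type_def N_def by blast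
  have kne: "\<And>i. i < f' \<Longrightarrow> k i \<noteq> k' i" proof
    fix i assume "i < f'" "k i = k' i" thus False using om[of i] wne by auto
  qed
  have pht: "\<And>i. i < f' \<Longrightarrow> {c i, d i} = {k i, k' i} \<and> r i + s i = e'" using A(10) unfolding pair_has_type_def by blast
  have cd1: "\<And>i. i < f' \<Longrightarrow> i \<in> shape f' k c \<Longrightarrow> c i = k i \<and> d i = k' i"
    by (frule pht, frule kne, auto simp: doubleton_eq_iff shape_def)
  have cd2: "\<And>i. i < f' \<Longrightarrow> i \<notin> shape f' k c \<Longrightarrow> c i = k' i \<and> d i = k i"
    by (frule pht, frule kne, auto simp: doubleton_eq_iff shape_def)
  have ms: "\<And>i. i < f' \<Longrightarrow> (\<not> transition f' (shape f' k c) i \<longrightarrow> r i = e') \<and>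
             (transition f' (shape f' k c) i \<longrightarrow> r i = e' - resid p f' (int (c i) - int (d i)))"
    using A(11) unfolding maximal_shape_def by blast
  have resb: "\<And>i. i < f' \<Longrightarrow> 0 < resid p f' (int (c i) - int (d i)) \<and> resid p f' (int (c i) - int (d i)) < N"
  proof -
    fix i assume i: "i < f'"
    have cdb: "c i < N" "d i < N" "c i \<noteq> d i" using pht[OF i] kb[OF i] kne[OF i] by (auto simp: doubleton_eq_iff)
    have Np: "int N > 0" using N2 by simp
    have m0: "(int (c i) - int (d i)) mod int N \<noteq> 0"
    proof
      assume "(int (c i) - int (d i)) mod int N = 0"
      then obtain q where q: "int (c i) - int (d i) = int N * q" by (auto simp: dvd_eq_mod_eq_0[symmetric] dvd_def)
      have "q = 0"
      proof (rule ccontr)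
        assume "q \<noteq> 0"
        hence "\<bar>int N * q\<bar> \<ge> int N" using Np \<open>q \<noteq> 0\<close> by (simp add: abs_mult mult_le_cancel_left1)
        moreover have "\<bar>int (c i) - int (d i)\<bar> < int N" using cdb by auto
        ultimately show False using q by simp
      qed
      thus False using q cdb by simp
    qed
    have "(int (c i) - int (d i)) mod int N \<ge> 0" "(int (c i) - int (d i)) mod int N < int N" using Np by auto
    with m0 show "0 < resid p f' (int (c i) - int (d i)) \<and> resid p f' (int (c i) - int (d i)) < N"
      unfolding resid_def N_def[symmetric] by auto
  qed
  have rpos: "\<And>i. i < f' \<Longrightarrow> r i > 0"
  proof -
    fix i assume i: "i < f'"
    show "r i > 0"
    proof (cases "transition f' (shape f' k c) i")
      case True thus ?thesis using ms[OF i] resb[OF i] eN by auto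
    next
      case False thus ?thesis using ms[OF i] eN N2 by auto
    qed
  qed
  have sT: "\<And>i. i < f' \<Longrightarrow> transition f' (shape f' k c) i \<Longrightarrow> s i > 0"
  proof -
    fix i assume i: "i < f'" and t: "transition f' (shape f' k c) i"
    show "s i > 0" using ms[OF i] t resb[OF i] eN pht[OF i] by auto
  qed
  have sN: "\<And>i. i < f' \<Longrightarrow> \<not> transition f' (shape f' k c) i \<Longrightarrow> s i = 0"
  proof -
    fix i assume i: "i < f'" and t: "\<not> transition f' (shape f' k c) i"
    show "s i = 0" using ms[OF i] t pht[OF i] by auto
  qed
  have ab: "\<And>i. i < f' \<Longrightarrow> a i \<noteq> 0 \<and> b i \<noteq> 0" using A(12) unfolding is_extension_def by blast
  show ?thesis
  proof (intro allI impI conjI)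
    fix i assume i: "i < f'"
    define j where "j = prev f' i"
    have j: "j < f'" using fpos unfolding j_def prev_def by simp
    have rp: "r i \<noteq> 0" using rpos[OF i] by simp
    {
      assume iJ: "i \<in> shape f' k c"
      show "\<forall>v\<in>D_eta p f' k c d z (prev f' i). F_D r a s b x i v = (0,0)"
      proof
        fix v assume v: "v \<in> D_eta p f' k c d z (prev f' i)"
        obtain v1 v2 where vv: "v = (v1,v2)" by (cases v)
        from v wroot have Dv: "mat_app (mat_mod_u (Gmat p f' c d z j w)) (v1,v2) = (w^k 0 * v1, w^k 0 * v2)"
          unfolding D_eta_def j_def vv by simp
        have cdi: "c i = k i \<and> d i = k' i" using cd1[OF i iJ] .
        show "F_D r a s b x i v = (0,0)"
        proof (cases "j \<in> shape f' k c")
          case True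
          have nt: "\<not> transition f' (shape f' k c) i" using True iJ unfolding transition_def j_def by simp
          have s: "s i = 0" using sN[OF i nt] .
          have cdj: "c j = k j \<and> d j = k' j" using cd1[OF j True] .
          have D2: "fps_nth (z j w) 0 * v1 + w ^ k' 0 * v2 = w^k 0 * v2"
            using Dv cdj om[OF j] by (simp add: Gmat_def)
          have ext: "g_P p f' c d z i w (phi_P p r a s b x i (1,0)) = phi_P p r a s b x i (g_P p f' c d z j w (1,0))"
            using A(12) i wroot unfolding is_extension_def j_def by blast
          have C: "w ^ k' 0 * fps_nth (x i) 0 = fps_nth (x i) 0 * w^k 0 + b i * fps_nth (z j w) 0"
            using arg_cong[OF ext, of "\<lambda>q. fps_nth (snd q) 0"] rp s cdi cdj om[OF i] om[OF j]
            by (simp add: g_P_def phi_P_def Gmat_def Phi_def fps_mult_nth_0 mult.commute)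
          have "(w^k 0 - w^k' 0) * (fps_nth (x i) 0 * v1 + b i * v2) = (w^k 0 - w^k' 0) * fps_nth (x i) 0 * v1 + b i * (fps_nth (z j w) 0 * v1)"
          proof -
            have "b i * (w^k 0 * v2) = b i * (fps_nth (z j w) 0 * v1 + w ^ k' 0 * v2)" using D2 by simp
            thus ?thesis by (simp add: algebra_simps)
          qed
          also have "\<dots> = 0" using C by (simp add: algebra_simps)
          finally have "fps_nth (x i) 0 * v1 + b i * v2 = 0" using wne by simp
          thus ?thesis using rp s by (simp add: F_D_def Phi_def vv)
        next
          case False
          have tr: "transition f' (shape f' k c) i" using False iJ unfolding transition_def j_def by simp
          have s: "s i \<noteq> 0" using sT[OF i tr] by simp
          have cdj: "c j = k' j \<and> d j = k j" using cd2[OF j False] .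
          have "w ^ k' 0 * v1 = w^k 0 * v1"
            using Dv cdj om[OF j] by (simp add: Gmat_def)
          hence "v1 = 0" using wne by simp
          thus ?thesis using rp s by (simp add: F_D_def Phi_def vv)
        qed
      qed
    }
    {
      assume iJ: "i \<notin> shape f' k c"
      show "\<forall>v\<in>D_eta p f' k c d z i. V_D e' cbar r a s b x i v = (0,0)"
      proof
        fix v assume v: "v \<in> D_eta p f' k c d z i"
        obtain v1 v2 where vv: "v = (v1,v2)" by (cases v)
        from v wroot have Dv: "mat_app (mat_mod_u (Gmat p f' c d z i w)) (v1,v2) = (w^k 0 * v1, w^k 0 * v2)"
          unfolding D_eta_def vv by simp
        have cdi: "c i = k' i \<and> d i = k i" using cd2[OF i iJ] .
        have "w ^ k' 0 * v1 = w^k 0 * v1"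
          using Dv cdi om[OF i] by (simp add: Gmat_def)
        hence v1: "v1 = 0" using wne by simp
        show "V_D e' cbar r a s b x i v = (0,0)"
          using Vfrak_eq[of a i b r s e' x] ab[OF i] pht[OF i] rp v1
          by (simp add: V_D_def vv fps_mult_nth_0)
      qed
    }
  qed
qed

end
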